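(* Let $\mathcal G$ be the $\mathbb Z$-periodic graph obtained from the one-dimensional lattice $\mathbb Z$ by attaching a pendant edge at each vertex, and let $H=A+Q$ with a $\mathbb Z$-periodic potential $Q$. Its fundamental graph has two vertices $v_1$ (degree 3) and $v_2$ (degree 1); write $q_s=Q(v_s)$. Then (a) $\mathcal I_1^0(Q)=q_1+q_2$, $\mathcal I_2^0(Q)=\frac12(q_1^2+q_2^2)$, $\mathcal I_2^{1}(Q)=\mathcal I_2^{-1}(Q)=q_1$ form a complete system of Floquet spectral invariants of $H$; (b) $\mathcal I_1(Q)=q_1+q_2$, $\mathcal I_2(Q)=\frac12(q_1^2+q_2^2)+2q_1$ form a complete system of periodic spectral invariants of $H$; (c) if a (complex-valued) potential $P$ has the same periodic spectrum as $Q$ (i.e. $\sigma(A(0)+P)=\sigma(A(0)+Q)$), then $P=(q_1,q_2)$ or $P=(q_2-2,q_1+2)$; in particular if $Q=0$ then $P=0$ or $P=(-2,2)$, and if $Q=-\varkappa=(-3,-1)$ then $P=-\varkappa$.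
   Context: The fundamental graph $\mathcal G_*$ consists of vertices $v_1,v_2$, a loop $\mathbf e_1$ at $v_1$ with edge index $1$, and an edge $\mathbf e_2$ between $v_1$ and $v_2$ with index $0$ (each taken with both orientations; inverse edge has negated index). Floquet operators: $H(k)=A(k)+Q$ on $\mathbb C^2$, $(A(k)f)(v)=\sum_{\mathbf e=(v,u)}e^{ik\tau(\mathbf e)}f(u)$, $k\in\mathbb R/2\pi\mathbb Z$; Floquet spectrum $\{\sigma(H(k))\}_k$, periodic spectrum $\sigma(H(0))$. A functional is a Floquet (periodic) spectral invariant if it takes equal values on potentials with equal Floquet (periodic) spectra; a family is complete if its equality is equivalent to equality of the spectra. Cycles: closed paths of oriented edges up to cyclic permutation; prime if not an $r$-fold repetition with $r\ge2$; length $|\mathbf c|$, index $\tau(\mathbf c)$ = sum of edge indices. Modified graph $\widetilde{\mathcal G}_*$: add a loop $\mathbf e_v$ of index $0$ at each vertex; weight $\omega(\mathbf c,Q)$ = product of $Q(v)$ over added loops $\mathbf e_v$ traversed (other edges weight 1). $\mathcal P,\widetilde{\mathcal P}$: prime cycles in $\mathcal G_*,\widetilde{\mathcal G}_*$. $\mathcal I_n^{\mathrm m}(Q)=\sum\frac1r\omega^r(\mathbf c,Q)$ over $r\in\{1,\dots,n\}$, $\mathbf c\in\widetilde{\mathcal P}\setminus\mathcal P$, $r|\mathbf c|=n$, $r\tau(\mathbf c)=\mathrm m$; $\mathcal I_n(Q)$ the same without index condition. *)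

theory Defs
  imports Complex_Main
begin

datatype vert = V1 | V2

text \<open>Oriented edges of the modified fundamental graph:
  L1 / L1i : the loop e1 at v1 (index 1) and its inverse (index -1);
  E2 / E2i : the edge e2 from v1 to v2 (index 0) and its inverse;
  Lv1 / Lv2 : the added loops e_v at v1, v2 (index 0), taken once each.\<close>
datatype oedge = L1 | L1i | E2 | E2i | Lv1 | Lv2

fun src :: "oedge \<Rightarrow> vert" where
  "src L1 = V1" | "src L1i = V1" | "src E2 = V1" | "src E2i = V2"
| "src Lv1 = V1" | "src Lv2 = V2"

fun tgt :: "oedge \<Rightarrow> vert" where
  "tgt L1 = V1" | "tgt L1i = V1" | "tgt E2 = V2" | "tgt E2i = V1"
| "tgt Lv1 = V1" | "tgt Lv2 = V2"

fun tau :: "oedge \<Rightarrow> int" where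
  "tau L1 = 1" | "tau L1i = -1" | "tau E2 = 0" | "tau E2i = 0"
| "tau Lv1 = 0" | "tau Lv2 = 0"

definition orig_edges :: "oedge set" where
  "orig_edges = {L1, L1i, E2, E2i}"

fun wt :: "(vert \<Rightarrow> complex) \<Rightarrow> oedge \<Rightarrow> complex" where
  "wt Q Lv1 = Q V1" | "wt Q Lv2 = Q V2" | "wt Q _ = 1"

definition Aop :: "real \<Rightarrow> (vert \<Rightarrow> complex) \<Rightarrow> vert \<Rightarrow> complex" where
  "Aop k f v = (\<Sum>e\<in>{e\<in>orig_edges. src e = v}. exp (\<i> * of_real k * of_int (tau e)) * f (tgt e))"

definition Hop :: "real \<Rightarrow> (vert \<Rightarrow> complex) \<Rightarrow> (vert \<Rightarrow> complex) \<Rightarrow> vert \<Rightarrow> complex" where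
  "Hop k Q f v = Aop k f v + Q v * f v"

definition spec :: "real \<Rightarrow> (vert \<Rightarrow> complex) \<Rightarrow> complex set" where
  "spec k Q = {z. \<exists>f. f \<noteq> (\<lambda>_. 0) \<and> Hop k Q f = (\<lambda>v. z * f v)}"

definition closed_path :: "oedge list \<Rightarrow> bool" where
  "closed_path xs \<longleftrightarrow> xs \<noteq> [] \<and>
     (\<forall>i < length xs. tgt (xs ! i) = src (xs ! ((i + 1) mod length xs)))"

text \<open>A cycle is a closed path up to cyclic permutation: the set of its rotations.\<close>
definition cyc :: "oedge list \<Rightarrow> oedge list set" where
  "cyc xs = {rotate i xs | i. True}"

definition cycles :: "oedge list set set" where
  "cycles = {cyc xs | xs. closed_path xs}"

definition rep :: "oedge list set \<Rightarrow> oedge list" where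
  "rep c = (SOME xs. xs \<in> c)"

definition clen :: "oedge list set \<Rightarrow> nat" where
  "clen c = length (rep c)"

definition cidx :: "oedge list set \<Rightarrow> int" where
  "cidx c = sum_list (map tau (rep c))"

definition omega :: "oedge list set \<Rightarrow> (vert \<Rightarrow> complex) \<Rightarrow> complex" where
  "omega c Q = prod_list (map (wt Q) (rep c))"

definition prime_list :: "oedge list \<Rightarrow> bool" where
  "prime_list xs \<longleftrightarrow> \<not> (\<exists>p r. r \<ge> 2 \<and> xs = concat (replicate r p))"

definition Pmod :: "oedge list set set" where
  "Pmod = {c \<in> cycles. prime_list (rep c)}"

definition Porig :: "oedge list set set" where
  "Porig = {c \<in> Pmod. set (rep c) \<subseteq> orig_edges}"

definition Inm :: "nat \<Rightarrow> int \<Rightarrow> (vert \<Rightarrow> complex) \<Rightarrow> complex" where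
  "Inm n m Q = (\<Sum>(r, c) \<in> {(r, c). r \<in> {1..n} \<and> c \<in> Pmod - Porig \<and>
                                  r * clen c = n \<and> int r * cidx c = m}.
                  omega c Q ^ r / of_nat r)"

definition In :: "nat \<Rightarrow> (vert \<Rightarrow> complex) \<Rightarrow> complex" where
  "In n Q = (\<Sum>(r, c) \<in> {(r, c). r \<in> {1..n} \<and> c \<in> Pmod - Porig \<and> r * clen c = n}.
                  omega c Q ^ r / of_nat r)"

definition pot :: "complex \<Rightarrow> complex \<Rightarrow> vert \<Rightarrow> complex" where
  "pot a b v = (case v of V1 \<Rightarrow> a | V2 \<Rightarrow> b)"

end

theory Submission
  imports Defs
begin



lemma src_V1: "{e \<in> orig_edges. src e = V1} = {L1, L1i, E2}"
  by (auto simp: orig_edges_def)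
lemma src_V2: "{e \<in> orig_edges. src e = V2} = {E2i}"
  by (auto simp: orig_edges_def)

definition aa :: "real \<Rightarrow> complex" where "aa k = exp (\<i> * of_real k) + exp (- (\<i> * of_real k))"

lemma Aop_V1: "Aop k f V1 = aa k * f V1 + f V2"
  unfolding Aop_def src_V1 aa_def by (simp add: algebra_simps)
lemma Aop_V2: "Aop k f V2 = f V1"
  unfolding Aop_def src_V2 by simp

lemma vert_fun_eq: "(f = g) \<longleftrightarrow> f V1 = g V1 \<and> f V2 = g V2" for f g :: "vert \<Rightarrow> 'a"
  by (metis (full_types) ext vert.exhaust)

lemma spec_char: "spec k Q = {z. z^2 - (aa k + Q V1 + Q V2) * z + ((aa k + Q V1) * Q V2 - 1) = 0}"
proof (rule set_eqI, rule iffI)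
  fix z assume "z \<in> spec k Q"
  then obtain f where f0: "f \<noteq> (\<lambda>_. 0)" and h: "Hop k Q f = (\<lambda>v. z * f v)" by (auto simp: spec_def)
  have e1: "(aa k + Q V1 - z) * f V1 + f V2 = 0" using fun_cong[OF h, of V1]
    by (simp add: Hop_def Aop_V1 algebra_simps)
  have e2: "f V1 + (Q V2 - z) * f V2 = 0" using fun_cong[OF h, of V2]
    by (simp add: Hop_def Aop_V2 algebra_simps)
  have nz: "f V1 \<noteq> 0 \<or> f V2 \<noteq> 0" using f0 vert_fun_eq[of f "\<lambda>_. 0"] by auto
  have d: "(aa k + Q V1 - z) * (Q V2 - z) - 1 = 0"
  proof (rule ccontr)
    assume dn: "(aa k + Q V1 - z) * (Q V2 - z) - 1 \<noteq> 0"
    have f2: "f V2 = - ((aa k + Q V1 - z) * f V1)" using e1 by (simp add: eq_neg_iff_add_eq_0 add.commute)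
    have f1: "f V1 = - ((Q V2 - z) * f V2)" using e2 by (simp add: eq_neg_iff_add_eq_0 add.commute)
    have "((aa k + Q V1 - z) * (Q V2 - z) - 1) * f V1 = 0"
      using e2 unfolding f2 by (simp add: algebra_simps)
    moreover have "((aa k + Q V1 - z) * (Q V2 - z) - 1) * f V2 = 0"
      using e1 unfolding f1 by (simp add: algebra_simps)
    ultimately show False using dn nz by auto
  qed
  then show "z \<in> {z. z^2 - (aa k + Q V1 + Q V2) * z + ((aa k + Q V1) * Q V2 - 1) = 0}"
    by (simp add: power2_eq_square algebra_simps)
next
  fix z assume "z \<in> {z. z^2 - (aa k + Q V1 + Q V2) * z + ((aa k + Q V1) * Q V2 - 1) = 0}"
  hence d: "(aa k + Q V1 - z) * (Q V2 - z) - 1 = 0" by (simp add: power2_eq_square algebra_simps)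
  define f where "f = (\<lambda>v. case v of V1 \<Rightarrow> (1::complex) | V2 \<Rightarrow> z - aa k - Q V1)"
  have "f \<noteq> (\<lambda>_. 0)" using vert_fun_eq[of f "\<lambda>_. 0"] by (simp add: f_def)
  moreover have "Hop k Q f = (\<lambda>v. z * f v)"
  proof -
    have "Hop k Q f V1 = z * f V1" by (simp add: Hop_def Aop_V1 f_def algebra_simps)
    moreover have "Hop k Q f V2 = z * f V2" using d
      by (simp add: Hop_def Aop_V2 f_def algebra_simps)
    ultimately show ?thesis using vert_fun_eq[of "Hop k Q f" "\<lambda>v. z * f v"] by simp
  qed
  ultimately show "z \<in> spec k Q" by (auto simp: spec_def)
qed




lemma quad_root_ex: "\<exists>r::complex. r^2 - s*r + d = 0"
proof -
  define r where "r = (s + csqrt (s^2 - 4*d)) / 2"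
  have "r^2 - s*r + d = ((csqrt (s^2 - 4*d))^2 - (s^2 - 4*d))/4" unfolding r_def by (simp add: power2_eq_square field_simps)
  hence "r^2 - s*r + d = 0" by (simp add: power2_csqrt)
  thus ?thesis by blast
qed

lemma quad_fact: "r^2 - s*r + d = 0 \<Longrightarrow> (z^2 - s*z + d = 0 \<longleftrightarrow> z = r \<or> z = s - r)" for r s d z :: complex
proof -
  assume h: "r^2 - s*r + d = 0"
  have "z^2 - s*z + d = (z - r) * (z - (s - r))" using h by (simp add: power2_eq_square algebra_simps)
  thus ?thesis by simp
qed

lemma quad_eq:
  fixes s1 d1 s2 d2 :: complex
  assumes "{z. z^2 - s1*z + d1 = 0} = {z. z^2 - s2*z + d2 = 0}"
  shows "s1 = s2 \<and> d1 = d2"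
proof -
  obtain r where r: "r^2 - s1*r + d1 = 0" using quad_root_ex by blast
  have d1: "d1 = r * (s1 - r)" using r by (simp add: power2_eq_square algebra_simps)
  have A: "\<And>z. z^2 - s1*z + d1 = 0 \<longleftrightarrow> z^2 - s2*z + d2 = 0" using assms by blast
  have r2: "r^2 - s2*r + d2 = 0" using A r by blast
  have d2: "d2 = r * (s2 - r)" using r2 by (simp add: power2_eq_square algebra_simps)
  have "s2 - r = r \<or> s2 - r = s1 - r" using A quad_fact[OF r, of "s2 - r"] quad_fact[OF r2, of "s2-r"] by blast
  moreover have "s1 - r = r \<or> s1 - r = s2 - r" using A quad_fact[OF r, of "s1 - r"] quad_fact[OF r2, of "s1-r"] by blast
  ultimately have "s1 = s2" by auto
  thus ?thesis using d1 d2 by simp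
qed

lemma spec_eq_iff: "spec k P = spec k Q \<longleftrightarrow>
   P V1 + P V2 = Q V1 + Q V2 \<and> (aa k + P V1) * P V2 = (aa k + Q V1) * Q V2"
proof
  assume "spec k P = spec k Q"
  hence "aa k + P V1 + P V2 = aa k + Q V1 + Q V2 \<and> (aa k + P V1) * P V2 - 1 = (aa k + Q V1) * Q V2 - 1"
    unfolding spec_char by (rule quad_eq)
  thus "P V1 + P V2 = Q V1 + Q V2 \<and> (aa k + P V1) * P V2 = (aa k + Q V1) * Q V2" by (simp add: add.assoc)
next
  assume "P V1 + P V2 = Q V1 + Q V2 \<and> (aa k + P V1) * P V2 = (aa k + Q V1) * Q V2"
  thus "spec k P = spec k Q" unfolding spec_char by (simp add: add.assoc)
qed

lemma aa0: "aa 0 = 2" by (simp add: aa_def)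
lemma aapi: "aa pi = -2"
  by (simp add: aa_def exp_minus)




lemma cyc1: "cyc [a] = {[a]}" unfolding cyc_def by simp
lemma cyc2: "cyc [a,b] = {[a,b],[b,a]}"
proof -
  have "rotate i [a,b] \<in> {[a,b],[b,a]}" for i
  proof -
    have "rotate i [a,b] = rotate (i mod 2) [a,b]" using rotate_conv_mod[of i "[a,b]"] by (simp add: numeral_2_eq_2)
    moreover have "i mod 2 = 0 \<or> i mod 2 = 1" by auto
    moreover have "rotate 0 [a,b] = [a,b]" "rotate 1 [a,b] = [b,a]" by auto
    ultimately show ?thesis by (metis insertCI)
  qed
  note R = this
  have R2: "[a,b] = rotate 0 [a,b]" "[b,a] = rotate 1 [a,b]" by auto
  show ?thesis unfolding cyc_def
  proof (rule set_eqI, rule iffI)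
    fix x assume "x \<in> {rotate i [a,b] |i. True}"
    then obtain i where "x = rotate i [a,b]" by blast
    thus "x \<in> {[a,b],[b,a]}" using R by simp
  next
    fix x assume "x \<in> {[a,b],[b,a]}"
    hence "x = [a,b] \<or> x = [b,a]" by simp
    thus "x \<in> {rotate i [a,b] |i. True}" using R2 by blast
  qed
qed

lemma self_cyc: "xs \<in> cyc xs"
  unfolding cyc_def by (rule CollectI, rule exI[of _ 0]) simp
lemma rep_in: "rep (cyc xs) \<in> cyc xs"
  unfolding rep_def by (rule someI, rule self_cyc)

lemma rep1: "rep (cyc [a]) = [a]"
proof -
  have "rep (cyc [a]) \<in> {[a]}" using rep_in[of "[a]"] unfolding cyc1 .
  thus ?thesis by simp
qed
lemma rep2: "rep (cyc [a,b]) = [a,b] \<or> rep (cyc [a,b]) = [b,a]"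
proof -
  have "rep (cyc [a,b]) \<in> {[a,b],[b,a]}" using rep_in[of "[a,b]"] unfolding cyc2 .
  thus ?thesis by simp
qed

lemma length_concat_rep: "length (concat (replicate r p)) = r * length p"
  by (induct r) auto
lemma length_concat_rep2: "xs = concat (replicate r p) \<Longrightarrow> length xs = r * length p"
  using length_concat_rep by simp

lemma prime1: "prime_list [a]"
  unfolding prime_list_def
proof
  assume "\<exists>p r. 2 \<le> r \<and> [a] = concat (replicate r p)"
  then obtain p r where "2 \<le> r" and e: "[a] = concat (replicate r p)" by blast
  have "length [a] = r * length p" by (rule length_concat_rep2[OF e])
  hence "1 = r * length p" by simp
  hence "r dvd 1" by (metis dvd_triv_left)
  hence "r = 1" by simp
  thus False using \<open>2 \<le> r\<close> by simp
qed

lemma prime2: "prime_list [a,b] \<longleftrightarrow> a \<noteq> b"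
proof
  assume pl: "prime_list [a,b]"
  show "a \<noteq> b"
  proof
    assume "a = b"
    hence "[a,b] = concat (replicate 2 [a])" by (simp add: numeral_2_eq_2)
    hence "\<exists>p r. 2 \<le> r \<and> [a,b] = concat (replicate r p)" by blast
    thus False using pl unfolding prime_list_def by blast
  qed
next
  assume ab: "a \<noteq> b"
  show "prime_list [a,b]" unfolding prime_list_def
  proof
    assume "\<exists>p r. 2 \<le> r \<and> [a,b] = concat (replicate r p)"
    then obtain p r where r: "2 \<le> r" and e: "[a,b] = concat (replicate r p)" by blast
    have l: "2 = r * length p" using length_concat_rep2[OF e] by simp
    have "r dvd 2" using l by (metis dvd_triv_left)
    hence "r \<le> 2" by (simp add: dvd_imp_le)
    hence "r = 2" using r by simp
    then have "length p = 1" using l r by simp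
    then obtain x where "p = [x]" by (auto simp: length_Suc_conv)
    have "concat (replicate r p) = [x,x]" using \<open>p = [x]\<close> \<open>r = 2\<close> by (simp add: numeral_2_eq_2)
    hence "[a,b] = [x,x]" using e by simp
    thus False using ab by simp
  qed
qed




lemma rep_rot: "\<exists>i. rep (cyc xs) = rotate i xs"
  using rep_in[of xs] unfolding cyc_def by blast

lemma clen_cyc: "clen (cyc xs) = length xs"
  using rep_rot[of xs] unfolding clen_def by auto

lemma cidx1: "cidx (cyc [a]) = tau a" unfolding cidx_def rep1 by simp
lemma omega1: "omega (cyc [a]) Q = wt Q a" unfolding omega_def rep1 by simp
lemma cidx2: "cidx (cyc [a,b]) = tau a + tau b"
  using rep2[of a b] unfolding cidx_def by auto
lemma omega2: "omega (cyc [a,b]) Q = wt Q a * wt Q b"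
  using rep2[of a b] unfolding omega_def by auto

abbreviation PP where "PP \<equiv> Pmod - Porig"

lemma in_PP1: "e \<in> {Lv1, Lv2} \<Longrightarrow> cyc [e] \<in> PP"
  unfolding Pmod_def Porig_def cycles_def
  by (auto simp: rep1 prime1 closed_path_def orig_edges_def)

lemma closed2: "closed_path [a,b] \<longleftrightarrow> tgt a = src b \<and> tgt b = src a"
proof
  assume "closed_path [a,b]"
  hence "\<forall>i<2. tgt ([a,b] ! i) = src ([a,b] ! ((i + 1) mod 2))" unfolding closed_path_def by (simp add: numeral_2_eq_2)
  from this[rule_format, of 0] this[rule_format, of 1] show "tgt a = src b \<and> tgt b = src a" by simp
next
  assume h: "tgt a = src b \<and> tgt b = src a"
  have "i < 2 \<Longrightarrow> tgt ([a,b] ! i) = src ([a,b] ! ((i + 1) mod 2))" for i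
    using h by (cases i) (auto simp: less_Suc_eq)
  thus "closed_path [a,b]" unfolding closed_path_def by (simp add: numeral_2_eq_2)
qed

lemma in_PP2: "b \<in> {L1, L1i} \<Longrightarrow> cyc [Lv1, b] \<in> PP"
proof -
  assume b: "b \<in> {L1, L1i}"
  have "closed_path [Lv1, b]" using b closed2 by auto
  hence "cyc [Lv1, b] \<in> cycles" unfolding cycles_def by blast
  moreover have "Lv1 \<noteq> b" using b by auto
  hence "prime_list [Lv1, b]" "prime_list [b, Lv1]" using prime2 by auto
  hence "prime_list (rep (cyc [Lv1, b]))" using rep2[of Lv1 b] by auto
  moreover have "\<not> set (rep (cyc [Lv1, b])) \<subseteq> orig_edges" using rep2[of Lv1 b]
    by (auto simp: orig_edges_def)
  ultimately show ?thesis unfolding Pmod_def Porig_def by blast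
qed

lemma cyc_of: "c \<in> cycles \<Longrightarrow> \<exists>xs. closed_path xs \<and> c = cyc xs"
  unfolding cycles_def by blast

lemma PP_len1: "c \<in> PP \<Longrightarrow> clen c = 1 \<Longrightarrow> c = cyc [Lv1] \<or> c = cyc [Lv2]"
proof -
  assume c: "c \<in> PP" and l: "clen c = 1"
  obtain xs where cp: "closed_path xs" and cx: "c = cyc xs" using c cyc_of unfolding Pmod_def Porig_def by blast
  have "length xs = 1" using l cx clen_cyc by simp
  then obtain e where xe: "xs = [e]" by (auto simp: length_Suc_conv)
  have "\<not> set (rep c) \<subseteq> orig_edges" using c unfolding Pmod_def Porig_def by blast
  hence "e \<notin> orig_edges" using cx xe rep1 by simp
  hence "e = Lv1 \<or> e = Lv2" by (cases e) (auto simp: orig_edges_def)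
  thus ?thesis using cx xe by auto
qed

lemma PP_len2: "c \<in> PP \<Longrightarrow> clen c = 2 \<Longrightarrow> c = cyc [Lv1, L1] \<or> c = cyc [Lv1, L1i]"
proof -
  assume c: "c \<in> PP" and l: "clen c = 2"
  obtain xs where cp: "closed_path xs" and cx: "c = cyc xs" using c cyc_of unfolding Pmod_def Porig_def by blast
  have "length xs = 2" using l cx clen_cyc by simp
  then obtain a b where xe: "xs = [a,b]" by (auto simp: length_Suc_conv numeral_2_eq_2)
  have t: "tgt a = src b \<and> tgt b = src a" using cp xe closed2 by simp
  have "prime_list (rep c)" using c unfolding Pmod_def by blast
  hence ab: "a \<noteq> b" using rep2[of a b] cx xe prime2[of a b] prime2[of b a] by auto
  have "\<not> set (rep c) \<subseteq> orig_edges" using c unfolding Pmod_def Porig_def by blast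
  hence no: "\<not> {a,b} \<subseteq> orig_edges" using cx xe rep2[of a b] by auto
  have C1: "cyc [L1, Lv1] = cyc [Lv1, L1]" "cyc [L1i, Lv1] = cyc [Lv1, L1i]"
    by (simp_all add: cyc2 insert_commute)
  show ?thesis unfolding cx xe using t ab no C1
    by (cases a; cases b; simp add: orig_edges_def)
qed

lemma dist1: "cyc [Lv1] \<noteq> cyc [Lv2]"
proof
  assume "cyc [Lv1] = cyc [Lv2]"
  hence "[Lv1] \<in> {[Lv2]}" using self_cyc[of "[Lv1]"] unfolding cyc1[of Lv2] by simp
  thus False by simp
qed
lemma dist2: "cyc [Lv1, L1] \<noteq> cyc [Lv1, L1i]"
proof
  assume "cyc [Lv1, L1] = cyc [Lv1, L1i]"
  hence "[Lv1, L1] \<in> {[Lv1, L1i], [L1i, Lv1]}" using self_cyc[of "[Lv1, L1]"] unfolding cyc2[of Lv1 L1i] by simp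
  thus False by simp
qed

lemma set1: "{(r, c). r \<in> {1..1} \<and> c \<in> PP \<and> r * clen c = 1 \<and> P r c}
   = {x \<in> {(1, cyc [Lv1]), (1, cyc [Lv2])}. P (fst x) (snd x)}"
proof (rule set_eqI, rule iffI)
  fix x assume "x \<in> {(r, c). r \<in> {1..1} \<and> c \<in> PP \<and> r * clen c = 1 \<and> P r c}"
  then obtain r c where x: "x = (r,c)" and h: "r \<in> {1..1}" "c \<in> PP" "r * clen c = 1" "P r c" by blast
  have "r = 1" "clen c = 1" using h by auto
  thus "x \<in> {x \<in> {(1, cyc [Lv1]), (1, cyc [Lv2])}. P (fst x) (snd x)}"
    using PP_len1[OF h(2)] h x by auto
next
  fix x assume "x \<in> {x \<in> {(1::nat, cyc [Lv1]), (1, cyc [Lv2])}. P (fst x) (snd x)}"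
  thus "x \<in> {(r, c). r \<in> {1..1} \<and> c \<in> PP \<and> r * clen c = 1 \<and> P r c}"
    using in_PP1[of Lv1] in_PP1[of Lv2] by (auto simp: clen_cyc)
qed

lemma set2: "{(r, c). r \<in> {1..2} \<and> c \<in> PP \<and> r * clen c = 2 \<and> P r c}
   = {x \<in> {(2, cyc [Lv1]), (2, cyc [Lv2]), (1, cyc [Lv1, L1]), (1, cyc [Lv1, L1i])}. P (fst x) (snd x)}"
proof (rule set_eqI, rule iffI)
  fix x assume "x \<in> {(r, c). r \<in> {1..2} \<and> c \<in> PP \<and> r * clen c = 2 \<and> P r c}"
  then obtain r c where x: "x = (r,c)" and h: "r \<in> {1..2}" "c \<in> PP" "r * clen c = 2" "P r c" by blast
  have "(r = 1 \<and> clen c = 2) \<or> (r = 2 \<and> clen c = 1)" using h(1,3) by (auto simp: le_Suc_eq numeral_2_eq_2)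
  thus "x \<in> {x \<in> {(2, cyc [Lv1]), (2, cyc [Lv2]), (1, cyc [Lv1, L1]), (1, cyc [Lv1, L1i])}. P (fst x) (snd x)}"
    using PP_len1[OF h(2)] PP_len2[OF h(2)] h x by auto
next
  fix x assume "x \<in> {x \<in> {(2::nat, cyc [Lv1]), (2, cyc [Lv2]), (1, cyc [Lv1, L1]), (1, cyc [Lv1, L1i])}. P (fst x) (snd x)}"
  thus "x \<in> {(r, c). r \<in> {1..2} \<and> c \<in> PP \<and> r * clen c = 2 \<and> P r c}"
    using in_PP1[of Lv1] in_PP1[of Lv2] in_PP2[of L1] in_PP2[of L1i] by (auto simp: clen_cyc)
qed




lemmas dists = dist1 dist1[symmetric] dist2 dist2[symmetric]

lemma Inm10: "Inm 1 0 Q = Q V1 + Q V2"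
proof -
  have "{(r, c). r \<in> {1..1} \<and> c \<in> PP \<and> r * clen c = 1 \<and> int r * cidx c = 0}
     = {(1::nat, cyc [Lv1]), (1, cyc [Lv2])}"
    unfolding set1 by (auto simp: cidx1)
  thus ?thesis unfolding Inm_def by (simp add: dists omega1)
qed

lemma In1: "In 1 Q = Q V1 + Q V2"
proof -
  have "{(r, c). r \<in> {1..1} \<and> c \<in> PP \<and> r * clen c = 1}
     = {(r, c). r \<in> {1..1} \<and> c \<in> PP \<and> r * clen c = 1 \<and> True}" by simp
  also have "\<dots> = {(1::nat, cyc [Lv1]), (1, cyc [Lv2])}"
    unfolding set1 by auto
  finally show ?thesis unfolding In_def by (simp add: dists omega1)
qed

lemma Inm20: "Inm 2 0 Q = (Q V1 ^ 2 + Q V2 ^ 2) / 2"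
proof -
  have "{(r, c). r \<in> {1..2} \<and> c \<in> PP \<and> r * clen c = 2 \<and> int r * cidx c = 0}
     = {(2::nat, cyc [Lv1]), (2, cyc [Lv2])}"
    unfolding set2 by (auto simp: cidx1 cidx2)
  thus ?thesis unfolding Inm_def by (simp add: dists omega1 add_divide_distrib)
qed

lemma Inm21: "Inm 2 1 Q = Q V1"
proof -
  have "{(r, c). r \<in> {1..2} \<and> c \<in> PP \<and> r * clen c = 2 \<and> int r * cidx c = 1}
     = {(1::nat, cyc [Lv1, L1])}"
    unfolding set2 by (auto simp: cidx1 cidx2)
  thus ?thesis unfolding Inm_def by (simp add: dists omega2)
qed

lemma Inm2m1: "Inm 2 (-1) Q = Q V1"
proof -
  have "{(r, c). r \<in> {1..2} \<and> c \<in> PP \<and> r * clen c = 2 \<and> int r * cidx c = -1}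
     = {(1::nat, cyc [Lv1, L1i])}"
    unfolding set2 by (auto simp: cidx1 cidx2)
  thus ?thesis unfolding Inm_def by (simp add: dists omega2)
qed

lemma In2: "In 2 Q = (Q V1 ^ 2 + Q V2 ^ 2) / 2 + 2 * Q V1"
proof -
  have "{(r, c). r \<in> {1..2} \<and> c \<in> PP \<and> r * clen c = 2}
     = {(r, c). r \<in> {1..2} \<and> c \<in> PP \<and> r * clen c = 2 \<and> True}" by simp
  also have "\<dots> = {(2::nat, cyc [Lv1]), (2, cyc [Lv2]), (1, cyc [Lv1, L1]), (1, cyc [Lv1, L1i])}"
    unfolding set2 by auto
  finally show ?thesis unfolding In_def by (simp add: dists omega1 omega2 add_divide_distrib)
qed




lemma pot_eq: "P = pot a b \<longleftrightarrow> P V1 = a \<and> P V2 = b"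
  using vert_fun_eq[of P "pot a b"] by (simp add: pot_def)

lemma floq: "(\<forall>k::real. spec k P = spec k Q) \<longleftrightarrow> P = Q"
proof
  assume h: "\<forall>k::real. spec k P = spec k Q"
  have s: "P V1 + P V2 = Q V1 + Q V2" and a: "(2 + P V1) * P V2 = (2 + Q V1) * Q V2"
    using h[rule_format, of 0] unfolding spec_eq_iff aa0 by auto
  have b: "(-2 + P V1) * P V2 = (-2 + Q V1) * Q V2"
    using h[rule_format, of pi] unfolding spec_eq_iff aapi by auto
  have "(2 + P V1) * P V2 - (-2 + P V1) * P V2 = (2 + Q V1) * Q V2 - (-2 + Q V1) * Q V2" using a b by simp
  moreover have "\<And>x y::complex. (2 + x) * y - (-2 + x) * y = 4 * y" by (simp add: algebra_simps)
  ultimately have "4 * P V2 = 4 * Q V2" by simp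
  hence 2: "P V2 = Q V2" by simp
  hence "P V1 = Q V1" using s by simp
  thus "P = Q" using 2 vert_fun_eq by blast
qed simp

lemma key0: "((p1^2 + (q1+q2-p1)^2)/2 + 2*p1) - ((q1^2+q2^2)/2 + 2*q1) = -((2+p1)*(q1+q2-p1) - (2+q1)*q2)"
  for p1 q1 q2 :: complex
  by (simp add: power2_eq_square algebra_simps divide_simps)

lemma aux: "x - y = -(u - v) \<Longrightarrow> (x = y \<longleftrightarrow> u = v)" for x y u v :: complex
proof -
  assume h: "x - y = -(u - v)"
  have "(x = y) = (x - y = 0)" "(u = v) = (-(u - v) = 0)" by auto
  thus ?thesis using h by simp
qed

lemma perq: "(In 1 P = In 1 Q \<and> In 2 P = In 2 Q) \<longleftrightarrow> spec 0 P = spec 0 Q"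
proof -
  define p1 p2 q1 q2 where "p1 = P V1" "p2 = P V2" "q1 = Q V1" "q2 = Q V2"
  have key: "p1 + p2 = q1 + q2 \<Longrightarrow>
     ((p1^2 + p2^2)/2 + 2*p1) - ((q1^2 + q2^2)/2 + 2*q1) = - ((2 + p1) * p2 - (2 + q1) * q2)"
  proof -
    assume "p1 + p2 = q1 + q2"
    hence e: "p2 = q1 + q2 - p1" by (simp add: algebra_simps)
    show ?thesis unfolding e using key0 .
  qed
  show ?thesis unfolding In1 In2 spec_eq_iff aa0 p1_p2_q1_q2_def[symmetric]
    using key aux by blast
qed

lemma perc: "spec 0 P = spec 0 Q \<Longrightarrow> P = pot (Q V1) (Q V2) \<or> P = pot (Q V2 - 2) (Q V1 + 2)"
proof -
  assume "spec 0 P = spec 0 Q"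
  hence s: "P V1 + P V2 = Q V1 + Q V2" and a: "(2 + P V1) * P V2 = (2 + Q V1) * Q V2"
    unfolding spec_eq_iff aa0 by auto
  have p2: "P V2 = Q V1 + Q V2 - P V1" using s by (simp add: algebra_simps)
  have "(P V1 - Q V1) * (P V1 - (Q V2 - 2)) = 0"
  proof -
    have "(2 + P V1) * (Q V1 + Q V2 - P V1) - (2 + Q V1) * Q V2 = - ((P V1 - Q V1) * (P V1 - (Q V2 - 2)))"
      by (simp add: algebra_simps)
    moreover have "(2 + P V1) * (Q V1 + Q V2 - P V1) - (2 + Q V1) * Q V2 = 0" using a unfolding p2 by simp
    ultimately show ?thesis by simp
  qed
  hence "P V1 = Q V1 \<or> P V1 = Q V2 - 2" by simp
  thus ?thesis unfolding pot_eq using p2 by auto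
qed



theorem mainTheorem7:
  fixes Q :: "vert \<Rightarrow> complex"
  shows
   "Inm 1 0 Q = Q V1 + Q V2
    \<and> Inm 2 0 Q = (Q V1 ^ 2 + Q V2 ^ 2) / 2
    \<and> Inm 2 1 Q = Q V1 \<and> Inm 2 (-1) Q = Q V1
    \<and> (\<forall>P :: vert \<Rightarrow> complex.
         (Inm 1 0 P = Inm 1 0 Q \<and> Inm 2 0 P = Inm 2 0 Q
          \<and> Inm 2 1 P = Inm 2 1 Q \<and> Inm 2 (-1) P = Inm 2 (-1) Q)
         \<longleftrightarrow> (\<forall>k::real. spec k P = spec k Q))
    \<and> In 1 Q = Q V1 + Q V2
    \<and> In 2 Q = (Q V1 ^ 2 + Q V2 ^ 2) / 2 + 2 * Q V1
    \<and> (\<forall>P :: vert \<Rightarrow> complex.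
         (In 1 P = In 1 Q \<and> In 2 P = In 2 Q) \<longleftrightarrow> spec 0 P = spec 0 Q)
    \<and> (\<forall>P :: vert \<Rightarrow> complex. spec 0 P = spec 0 Q \<longrightarrow>
         P = pot (Q V1) (Q V2) \<or> P = pot (Q V2 - 2) (Q V1 + 2))
    \<and> (Q = pot 0 0 \<longrightarrow> (\<forall>P :: vert \<Rightarrow> complex. spec 0 P = spec 0 Q \<longrightarrow>
         P = pot 0 0 \<or> P = pot (-2) 2))
    \<and> (Q = pot (-3) (-1) \<longrightarrow> (\<forall>P :: vert \<Rightarrow> complex. spec 0 P = spec 0 Q \<longrightarrow>
         P = pot (-3) (-1)))"
proof -
  have F: "(Inm 1 0 P = Inm 1 0 Q \<and> Inm 2 0 P = Inm 2 0 Q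
          \<and> Inm 2 1 P = Inm 2 1 Q \<and> Inm 2 (-1) P = Inm 2 (-1) Q)
         \<longleftrightarrow> (\<forall>k::real. spec k P = spec k Q)" for P
  proof -
    have "(Inm 1 0 P = Inm 1 0 Q \<and> Inm 2 0 P = Inm 2 0 Q
          \<and> Inm 2 1 P = Inm 2 1 Q \<and> Inm 2 (-1) P = Inm 2 (-1) Q) \<longleftrightarrow> P = Q"
    proof
      assume h: "Inm 1 0 P = Inm 1 0 Q \<and> Inm 2 0 P = Inm 2 0 Q
          \<and> Inm 2 1 P = Inm 2 1 Q \<and> Inm 2 (-1) P = Inm 2 (-1) Q"
      hence 1: "P V1 = Q V1" unfolding Inm21 by simp
      hence "P V2 = Q V2" using h unfolding Inm10 by simp
      thus "P = Q" using 1 vert_fun_eq by blast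
    qed simp
    thus ?thesis using floq by simp
  qed
  have C: "spec 0 P = spec 0 Q \<longrightarrow> P = pot (Q V1) (Q V2) \<or> P = pot (Q V2 - 2) (Q V1 + 2)" for P
    using perc by blast
  have D: "Q = pot 0 0 \<longrightarrow> (\<forall>P :: vert \<Rightarrow> complex. spec 0 P = spec 0 Q \<longrightarrow>
         P = pot 0 0 \<or> P = pot (-2) 2)"
  proof (intro impI allI)
    fix P assume q: "Q = pot 0 0" and s: "spec 0 P = spec 0 Q"
    have "Q V1 = 0" "Q V2 = 0" using q by (simp_all add: pot_def)
    thus "P = pot 0 0 \<or> P = pot (-2) 2" using C[of P] s by simp
  qed
  have E: "Q = pot (-3) (-1) \<longrightarrow> (\<forall>P :: vert \<Rightarrow> complex. spec 0 P = spec 0 Q \<longrightarrow>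
         P = pot (-3) (-1))"
  proof (intro impI allI)
    fix P assume q: "Q = pot (-3) (-1)" and s: "spec 0 P = spec 0 Q"
    have "Q V1 = -3" "Q V2 = -1" using q by (simp_all add: pot_def)
    thus "P = pot (-3) (-1)" using C[of P] s by simp
  qed
  show ?thesis
    apply (intro conjI)
    apply (rule Inm10) apply (rule Inm20) apply (rule Inm21) apply (rule Inm2m1)
    apply (rule allI, rule F)
    apply (rule In1) apply (rule In2)
    apply (rule allI, rule perq)
    apply (rule allI, rule C)
    apply (rule D) apply (rule E)
    done
qed

end
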